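(* In the standing setting of the context, for all $r,t>0$ and all $x\in M$, $$\mathbb{P}^x\big(d(X_t,x)\le r\big)\asymp1\wedge\frac{V(r)}{V(\phi^{-1}(t))},$$ with comparison constants independent of $x,r,t$.
   Context: Standing setting: $(M,d)$ is a locally compact separable metric space, $\mu$ a positive Radon measure on $M$ with full support, $(\mathcal{E},\mathcal{F})$ a regular Dirichlet form on $L^2(M;\mu)$ (no killing part), and $X=(\{X_t\},\{\mathbb P^x\})$ the associated $\mu$-symmetric Hunt process. $V,\phi$ are increasing functions on $(0,\infty)$, $\phi^{-1}$ the inverse of $\phi$, with constants $c_i,d_i>0$ ($i=1,\dots,4$) such that $c_1(R/r)^{d_1}\le V(R)/V(r)\le c_2(R/r)^{d_2}$ and $c_3(R/r)^{d_3}\le\phi(R)/\phi(r)\le c_4(R/r)^{d_4}$ for all $0<r<R<\infty$. $X$ has a symmetric heat kernel $p(t,x,y)$ defined for all $x,y\in M$, $t>0$, with $p(t,x,y)\asymp\frac{1}{V(\phi^{-1}(t))}\wedge\frac{t}{V(d(x,y))\phi(d(x,y))}$ for all $x,y,t$. $f\asymp g$ means $c^{-1}f\le g\le cf$ with $c\ge1$ independent of the variables. *)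

theory Defs
  imports "HOL-Probability.Probability"
begin

definition inv_pos :: "(real \<Rightarrow> real) \<Rightarrow> real \<Rightarrow> real" where
  "inv_pos \<phi> t = inv_into {0<..} \<phi> t"

text \<open>Two-sided heat kernel scale
  1/V(phi^{-1}(t)) min t/(V(d)phi(d)); for d = 0 the second term is +infinity.\<close>
definition hk_scale :: "(real \<Rightarrow> real) \<Rightarrow> (real \<Rightarrow> real) \<Rightarrow> real \<Rightarrow> real \<Rightarrow> real" where
  "hk_scale V \<phi> t \<rho> =
     (if \<rho> = 0 then 1 / V (inv_pos \<phi> t)
      else min (1 / V (inv_pos \<phi> t)) (t / (V \<rho> * \<phi> \<rho>)))"

definition power_growth :: "(real \<Rightarrow> real) \<Rightarrow> real \<Rightarrow> real \<Rightarrow> real \<Rightarrow> real \<Rightarrow> bool" where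
  "power_growth f c1 c2 d1 d2 \<longleftrightarrow>
     (\<forall>r R. 0 < r \<longrightarrow> r < R \<longrightarrow>
        c1 * (R / r) powr d1 \<le> f R / f r \<and> f R / f r \<le> c2 * (R / r) powr d2)"

end

theory Submission
  imports Defs "HOL-Probability.Probability"
begin


lemma L1:
  fixes f :: "'a \<Rightarrow> real"
  assumes A: "A \<in> sets M" and int: "integrable M (\<lambda>x. indicator A x * f x)"
    and a: "a > 0" and lb: "\<And>x. x \<in> A \<Longrightarrow> a \<le> f x"
  shows "emeasure M A < \<infinity>" "a * measure M A \<le> integral\<^sup>L M (\<lambda>x. indicator A x * f x)"
proof -
  have i1: "integrable M (\<lambda>x. indicator A x * a)"
    apply (rule Bochner_Integration.integrable_bound[OF int])
    using A apply measurable
    using a lb by (auto simp: indicator_def intro!: AE_I2) (metis abs_ge_self order.trans)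
  then have "integrable M (indicator A :: _ \<Rightarrow> real)"
    using a by simp
  then show "emeasure M A < \<infinity>" using A by (simp add: integrable_indicator_iff sets.Int_space_eq2)
  have "integral\<^sup>L M (\<lambda>x. indicator A x * a) \<le> integral\<^sup>L M (\<lambda>x. indicator A x * f x)"
    by (rule integral_mono[OF i1 int]) (use lb in \<open>auto simp: indicator_def\<close>)
  then show "a * measure M A \<le> integral\<^sup>L M (\<lambda>x. indicator A x * f x)" using A by (simp add: sets.Int_space_eq2 mult.commute)
qed

lemma L2:
  fixes f :: "'a \<Rightarrow> real"
  assumes A: "A \<in> sets M" "emeasure M A < \<infinity>" and int: "integrable M (\<lambda>x. indicator A x * f x)"
    and ub: "\<And>x. x \<in> A \<Longrightarrow> f x \<le> b"
  shows "integral\<^sup>L M (\<lambda>x. indicator A x * f x) \<le> b * measure M A"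
proof -
  have i1: "integrable M (\<lambda>x. indicator A x * b)"
    using A by (simp add: integrable_indicator_iff sets.Int_space_eq2)
  have "integral\<^sup>L M (\<lambda>x. indicator A x * f x) \<le> integral\<^sup>L M (\<lambda>x. indicator A x * b)"
    by (rule integral_mono[OF int i1]) (use ub in \<open>auto simp: indicator_def\<close>)
  then show ?thesis using A by (simp add: sets.Int_space_eq2 mult.commute)
qed
theorem lemma4p20:
  fixes \<mu> :: "'a::{metric_space, second_countable_topology} measure"
    and V \<phi> :: "real \<Rightarrow> real"
    and c1 c2 c3 c4 d1 d2 d3 d4 :: real
    and p :: "real \<Rightarrow> 'a \<Rightarrow> 'a \<Rightarrow> real"
    and Px :: "'a \<Rightarrow> 'w measure"
    and X :: "real \<Rightarrow> 'w \<Rightarrow> 'a option"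
  assumes loc_compact: "locally compact (UNIV :: 'a set)"
    and mu_borel: "sets \<mu> = sets borel"
    and mu_radon: "\<And>K. compact K \<Longrightarrow> emeasure \<mu> K < \<infinity>"
    and mu_support: "\<And>U. open U \<Longrightarrow> U \<noteq> {} \<Longrightarrow> emeasure \<mu> U > 0"
    and consts_pos: "c1 > 0" "c2 > 0" "c3 > 0" "c4 > 0" "d1 > 0" "d2 > 0" "d3 > 0" "d4 > 0"
    and V_pos: "\<And>r. r > 0 \<Longrightarrow> V r > 0"
    and V_mono: "mono_on {0<..} V"
    and phi_mono: "strict_mono_on {0<..} \<phi>"
    and phi_onto: "\<phi> ` {0<..} = {0<..}"
    and V_growth: "power_growth V c1 c2 d1 d2"
    and phi_growth: "power_growth \<phi> c3 c4 d3 d4"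
    and Px_prob: "\<And>x. prob_space (Px x)"
    and p_meas: "\<And>t x. t > 0 \<Longrightarrow> (\<lambda>y. p t x y) \<in> borel_measurable \<mu>"
    and p_sym: "\<And>t x y. t > 0 \<Longrightarrow> p t x y = p t y x"
    and p_semigroup: "\<And>s t x y. s > 0 \<Longrightarrow> t > 0 \<Longrightarrow>
        p (s + t) x y = (\<integral>z. p s x z * p t z y \<partial>\<mu>)"
    and X_law: "\<And>x t A. t > 0 \<Longrightarrow> A \<in> sets borel \<Longrightarrow>
        {\<omega> \<in> space (Px x). \<exists>y\<in>A. X t \<omega> = Some y} \<in> sets (Px x) \<and>
        set_integrable \<mu> A (\<lambda>y. p t x y) \<and>
        measure (Px x) {\<omega> \<in> space (Px x). \<exists>y\<in>A. X t \<omega> = Some y}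
          = (\<integral>y\<in>A. p t x y \<partial>\<mu>)"
    and HK: "\<exists>c\<ge>1. \<forall>t>0. \<forall>x y.
        hk_scale V \<phi> t (dist x y) / c \<le> p t x y \<and> p t x y \<le> c * hk_scale V \<phi> t (dist x y)"
  shows "\<exists>C\<ge>1. \<forall>r>0. \<forall>t>0. \<forall>x.
     min 1 (V r / V (inv_pos \<phi> t)) / C
       \<le> measure (Px x) {\<omega> \<in> space (Px x). \<exists>y. X t \<omega> = Some y \<and> dist y x \<le> r}
   \<and> measure (Px x) {\<omega> \<in> space (Px x). \<exists>y. X t \<omega> = Some y \<and> dist y x \<le> r}
       \<le> C * min 1 (V r / V (inv_pos \<phi> t))"
proof -
  obtain c where c1: "c \<ge> 1" and HKc: "\<And>t x y. t > 0 \<Longrightarrow>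
      hk_scale V \<phi> t (dist x y) / c \<le> p t x y \<and> p t x y \<le> c * hk_scale V \<phi> t (dist x y)"
    using HK by blast
  define \<psi> where "\<psi> = inv_pos \<phi>"
  have psi: "\<psi> t > 0 \<and> \<phi> (\<psi> t) = t" if "t > 0" for t
  proof -
    have "t \<in> \<phi> ` {0<..}" using phi_onto that by simp
    then show ?thesis unfolding \<psi>_def inv_pos_def
      using inv_into_into[of t \<phi> "{0<..}"] f_inv_into_f[of t \<phi> "{0<..}"] by simp
  qed
  have psi_phi: "\<psi> (\<phi> s) = s" if "s > 0" for s
    unfolding \<psi>_def inv_pos_def
    using inv_into_f_f[OF strict_mono_on_imp_inj_on[OF phi_mono], of s] that by simp
  have phi_pos: "\<phi> s > 0" if "s > 0" for s
    using phi_onto that by auto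
  have Vle: "V a \<le> V b" if "0 < a" "a \<le> b" for a b
    using mono_onD[OF V_mono, of a b] that by simp
  have phile: "\<phi> a \<le> \<phi> b" if "0 < a" "a \<le> b" for a b
    using strict_mono_on_leD[OF phi_mono, of a b] that by simp
  have Vgr: "c1 * (R / r) powr d1 \<le> V R / V r \<and> V R / V r \<le> c2 * (R / r) powr d2"
    if "0 < r" "r < R" for r R
    using V_growth that unfolding power_growth_def by blast
  have phigr: "c3 * (R / r) powr d3 \<le> \<phi> R / \<phi> r \<and> \<phi> R / \<phi> r \<le> c4 * (R / r) powr d4"
    if "0 < r" "r < R" for r R
    using phi_growth that unfolding power_growth_def by blast
  have Vpsi: "V (\<psi> t) > 0" if "t > 0" for t using psi[OF that] V_pos by blast
  have hk_pos: "hk_scale V \<phi> t (dist x y) > 0" if "t > 0" for t and x y :: 'a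
  proof (cases "dist x y = 0")
    case True then show ?thesis using Vpsi[OF that] by (simp add: hk_scale_def \<psi>_def)
  next
    case False
    then have "dist x y > 0" by simp
    then have "t / (V (dist x y) * \<phi> (dist x y)) > 0"
      using V_pos phi_pos that by simp
    then show ?thesis using Vpsi[OF that] False by (simp add: hk_scale_def \<psi>_def)
  qed
  have p_nn: "p t x y \<ge> 0" if "t > 0" for t and x y :: 'a
    using HKc[OF that, of x y] hk_pos[OF that, of x y] c1
    by (smt (verit) divide_nonneg_pos)
  have hk_le: "hk_scale V \<phi> t (dist x y) \<le> 1 / V (\<psi> t)" if "t > 0" for t and x y :: 'a
    by (simp add: hk_scale_def \<psi>_def)
  have p_le: "p t x y \<le> c / V (\<psi> t)" if "t > 0" for t and x y :: 'a
  proof -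
    have "p t x y \<le> c * hk_scale V \<phi> t (dist x y)" using HKc[OF that] by blast
    also have "\<dots> \<le> c * (1 / V (\<psi> t))" using hk_le[OF that, of x y] c1 by (intro mult_left_mono) auto
    finally show ?thesis by simp
  qed
  have hk_near: "hk_scale V \<phi> t (dist x y) = 1 / V (\<psi> t)" if "t > 0" "dist x y \<le> \<psi> t" for t and x y :: 'a
  proof (cases "dist x y = 0")
    case True then show ?thesis by (simp add: hk_scale_def \<psi>_def)
  next
    case False
    define d where "d = dist x y"
    have d: "d > 0" "d \<le> \<psi> t" using False that unfolding d_def by auto
    have "V d \<le> V (\<psi> t)" using Vle d by simp
    moreover have "\<phi> d \<le> t" using phile[OF d] psi[OF that(1)] by simp
    moreover have "V d > 0" "\<phi> d > 0" using V_pos phi_pos d by auto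
    ultimately have "V d * \<phi> d \<le> V (\<psi> t) * t" by (simp add: mult_mono)
    then have "1 / V (\<psi> t) \<le> t / (V d * \<phi> d)"
      using Vpsi[OF that(1)] \<open>V d > 0\<close> \<open>\<phi> d > 0\<close> that(1)
      by (simp add: field_simps)
    then show ?thesis using False unfolding hk_scale_def d_def \<psi>_def by simp
  qed
  have p_near: "p t x y \<ge> 1 / (c * V (\<psi> t))" if "t > 0" "dist x y \<le> \<psi> t" for t and x y :: 'a
    using HKc[OF that(1), of x y] hk_near[OF that] by (simp add: mult.commute)
  have hk_far: "hk_scale V \<phi> t (dist x y) \<le> t / (V (dist x y) * \<phi> (dist x y))"
    if "t > 0" "dist x y > 0" for t and x y :: 'a
    using that by (simp add: hk_scale_def)
  have cb_sets: "cball x r \<in> sets \<mu>" for x :: 'a and r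
    using mu_borel by simp
  define Pr where "Pr x t r = measure (Px x) {\<omega> \<in> space (Px x). \<exists>y. X t \<omega> = Some y \<and> dist y x \<le> r}"
    for x :: 'a and t r
  have law: "Pr x t r = integral\<^sup>L \<mu> (\<lambda>y. indicator (cball x r) y * p t x y)
      \<and> integrable \<mu> (\<lambda>y. indicator (cball x r) y * p t x y)" if "t > 0" for x :: 'a and t r
  proof -
    have e: "{\<omega> \<in> space (Px x). \<exists>y. X t \<omega> = Some y \<and> dist y x \<le> r}
        = {\<omega> \<in> space (Px x). \<exists>y\<in>cball x r. X t \<omega> = Some y}"
      by (auto simp: dist_commute)
    have cb: "cball x r \<in> sets borel" by simp
    note XL = X_law[OF that cb, of x]
    have h1: "integrable \<mu> (\<lambda>y. indicator (cball x r) y * p t x y)"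
      using XL unfolding set_integrable_def real_scaleR_def by (elim conjE)
    have h2: "Pr x t r = integral\<^sup>L \<mu> (\<lambda>y. indicator (cball x r) y * p t x y)"
      using XL unfolding set_lebesgue_integral_def real_scaleR_def Pr_def e by (elim conjE)
    show ?thesis using h2 h1 by (rule conjI)
  qed
  have Pr_le1: "Pr x t r \<le> 1" for x :: 'a and t r
    unfolding Pr_def using prob_space.prob_le_1[OF Px_prob] by blast
  have total: "integrable \<mu> (\<lambda>y. p t x y) \<and> integral\<^sup>L \<mu> (\<lambda>y. p t x y) \<le> 1" if "t > 0" for t and x :: 'a
  proof -
    have U: "UNIV \<in> sets (borel :: 'a measure)" by (metis sets.top space_borel)
    note XL = X_law[OF that U, of x]
    have ind: "(\<lambda>y. indicator (UNIV :: 'a set) y * p t x y) = (\<lambda>y. p t x y)"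
      by (rule ext) (simp only: indicator_UNIV mult_1)
    have h1: "integrable \<mu> (\<lambda>y. p t x y)"
      using XL unfolding set_integrable_def real_scaleR_def ind by (elim conjE)
    have h2: "measure (Px x) {\<omega> \<in> space (Px x). \<exists>y\<in>UNIV. X t \<omega> = Some y} = integral\<^sup>L \<mu> (\<lambda>y. p t x y)"
      using XL unfolding set_lebesgue_integral_def real_scaleR_def ind by (elim conjE)
    show ?thesis using h1 h2 prob_space.prob_le_1[OF Px_prob, of x "{\<omega> \<in> space (Px x). \<exists>y\<in>UNIV. X t \<omega> = Some y}"]
      by linarith
  qed
  have vol_up: "emeasure \<mu> (cball x \<rho>) < \<infinity> \<and> measure \<mu> (cball x \<rho>) \<le> c * V \<rho>"
    if "\<rho> > 0" for x :: 'a and \<rho>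
  proof -
    define t where "t = \<phi> \<rho>"
    have t: "t > 0" "\<psi> t = \<rho>" using phi_pos psi_phi that unfolding t_def by auto
    have a: "1 / (c * V \<rho>) > 0" using c1 V_pos that by simp
    have lb: "1 / (c * V \<rho>) \<le> p t x y" if "y \<in> cball x \<rho>" for y
      using p_near[OF t(1), of x y] that t by simp
    have L1a: "emeasure \<mu> (cball x \<rho>) < \<infinity>"
      by (rule L1(1)[OF cb_sets conjunct2[OF law[OF t(1)]] a lb])
    have L1b: "1 / (c * V \<rho>) * measure \<mu> (cball x \<rho>)
        \<le> integral\<^sup>L \<mu> (\<lambda>y. indicator (cball x \<rho>) y * p t x y)"
      by (rule L1(2)[OF cb_sets conjunct2[OF law[OF t(1)]] a lb])
    have "1 / (c * V \<rho>) * measure \<mu> (cball x \<rho>) \<le> 1"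
      using L1b law[OF t(1), of x \<rho>] Pr_le1[of x t \<rho>] by linarith
    then have "measure \<mu> (cball x \<rho>) \<le> c * V \<rho>"
      using c1 V_pos[OF that] by (simp add: field_simps)
    then show ?thesis using L1a by simp
  qed
  have vol_low: "\<exists>K2>0. \<forall>x \<rho>. \<rho> > 0 \<longrightarrow> K2 * V \<rho> \<le> measure \<mu> (cball x \<rho>)"
  proof -
    define B where "B = max 1 (c2 * (2 / c3) powr (d2 / d3))"
    define K where "K = max 2 ((4 * c^2 * B / c1) powr (1 / d1))"
    have B1: "B \<ge> 1" unfolding B_def by simp
    have K2': "K \<ge> 2" unfolding K_def by simp
    have KB: "4 * c^2 * B \<le> c1 * K powr d1"
    proof -
      have pos: "4 * c^2 * B / c1 > 0" using B1 c1 consts_pos(1) by simp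
      have "(4 * c^2 * B / c1) powr (1 / d1) \<le> K" unfolding K_def by simp
      then have "((4 * c^2 * B / c1) powr (1 / d1)) powr d1 \<le> K powr d1"
        using consts_pos(5) by (intro powr_mono2) auto
      also have "((4 * c^2 * B / c1) powr (1 / d1)) powr d1 = 4 * c^2 * B / c1"
        using pos consts_pos(5) by (simp add: powr_powr del: abs_divide)
      finally show ?thesis using consts_pos(1) by (simp add: field_simps)
    qed
    have core: "V s / (2 * c^3 * B) \<le> measure \<mu> (cball x (K * s))" if s: "s > 0" for x :: 'a and s
    proof -
      define t where "t = \<phi> s"
      have t: "t > 0" "\<psi> t = s" using phi_pos psi_phi s unfolding t_def by auto
      have Vs: "V s > 0" using V_pos s by simp
      have tt: "t + t > 0" using t by simp
      have semi: "p (t + t) x x = integral\<^sup>L \<mu> (\<lambda>z. (p t x z)^2)"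
      proof -
        have "p (t + t) x x = integral\<^sup>L \<mu> (\<lambda>z. p t x z * p t z x)" using p_semigroup[OF t(1) t(1)] .
        also have "(\<lambda>z. p t x z * p t z x) = (\<lambda>z. (p t x z)^2)"
          using p_sym[OF t(1)] by (simp add: power2_eq_square)
        finally show ?thesis .
      qed
      have lowp: "1 / (c * V (\<psi> (t + t))) \<le> p (t + t) x x"
        using p_near[OF tt, of x x] psi[OF tt] by simp
      have VR: "V (\<psi> (t + t)) \<le> B * V s"
      proof -
        define R where "R = \<psi> (t + t)"
        have R: "R > 0" "\<phi> R = 2 * \<phi> s" using psi[OF tt] unfolding R_def t_def by auto
        show ?thesis
        proof (cases "R \<le> s")
          case True
          then have "V R \<le> V s" using Vle R by simp
          also have "\<dots> \<le> B * V s" using B1 Vs by simp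
          finally show ?thesis unfolding R_def .
        next
          case False
          then have sR: "s < R" by simp
          have "c3 * (R / s) powr d3 \<le> 2" using conjunct1[OF phigr[OF s sR]] R phi_pos[OF s] by simp
          then have a: "(R / s) powr d3 \<le> 2 / c3" using consts_pos(3) by (simp add: field_simps)
          have "(R / s) powr d2 = ((R / s) powr d3) powr (d2 / d3)"
            using consts_pos(7) by (simp add: powr_powr)
          also have "\<dots> \<le> (2 / c3) powr (d2 / d3)"
            using a consts_pos by (intro powr_mono2) auto
          finally have b: "(R / s) powr d2 \<le> (2 / c3) powr (d2 / d3)" .
          have "V R / V s \<le> c2 * (R / s) powr d2" using conjunct2[OF Vgr[OF s sR]] .
          also have "\<dots> \<le> c2 * (2 / c3) powr (d2 / d3)" using b consts_pos(2) by simp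
          also have "\<dots> \<le> B" unfolding B_def by simp
          finally have "V R / V s \<le> B" .
          then show ?thesis using Vs unfolding R_def[symmetric] by (simp add: field_simps)
        qed
      qed
      have VRpos: "V (\<psi> (t + t)) > 0" using Vpsi[OF tt] .
      have "1 / (c * (B * V s)) \<le> 1 / (c * V (\<psi> (t + t)))"
        using VR VRpos c1 B1 Vs by (intro divide_left_mono mult_left_mono mult_pos_pos) auto
      with lowp semi have low: "1 / (c * B * V s) \<le> integral\<^sup>L \<mu> (\<lambda>z. (p t x z)^2)"
        by (simp add: mult.assoc)
      have lowpos: "1 / (c * B * V s) > 0" using c1 B1 Vs by simp
      have int_sq: "integrable \<mu> (\<lambda>z. (p t x z)^2)"
      proof (rule ccontr)
        assume "\<not> integrable \<mu> (\<lambda>z. (p t x z)^2)"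
        then have "integral\<^sup>L \<mu> (\<lambda>z. (p t x z)^2) = 0" by (rule not_integrable_integral_eq)
        then show False using low lowpos by linarith
      qed
      define \<epsilon> where "\<epsilon> = 1 / (4 * c * B * V s)"
      have eps: "\<epsilon> \<ge> 0" unfolding \<epsilon>_def using c1 B1 Vs by simp
      have pw: "(p t x z)^2 \<le> (c / V s)^2 * indicator (cball x (K * s)) z + \<epsilon> * p t x z" for z
      proof (cases "z \<in> cball x (K * s)")
        case True
        have "p t x z \<le> c / V s" using p_le[OF t(1)] t by simp
        then have "(p t x z)^2 \<le> (c / V s)^2" using p_nn[OF t(1)] by (intro power_mono) auto
        moreover have "\<epsilon> * p t x z \<ge> 0" using eps p_nn[OF t(1)] by simp
        ultimately show ?thesis using True by simp
      next
        case False
        define d where "d = dist x z"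
        have d: "d > K * s" using False unfolding d_def by simp
        have Ks: "K * s > 0" "s < K * s" using K2' s by auto
        have dpos: "d > 0" using d Ks by simp
        have "c1 * K powr d1 \<le> V (K * s) / V s" using conjunct1[OF Vgr[OF s Ks(2)]] s by simp
        then have "c1 * K powr d1 * V s \<le> V (K * s)" using Vs by (simp add: field_simps)
        also have "\<dots> \<le> V d" using Vle Ks d by simp
        finally have Vd: "c1 * K powr d1 * V s \<le> V d" .
        have "4 * c^2 * B * V s \<le> c1 * K powr d1 * V s" using KB Vs by simp
        with Vd have Vd2: "4 * c^2 * B * V s \<le> V d" by linarith
        have Vdpos: "V d > 0" using V_pos dpos by simp
        have phid: "t \<le> \<phi> d" using phile[OF s] d Ks unfolding t_def by simp
        have phidpos: "\<phi> d > 0" using phi_pos dpos by simp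
        have "p t x z \<le> c * hk_scale V \<phi> t d" using HKc[OF t(1), of x z] unfolding d_def by simp
        also have "\<dots> \<le> c * (t / (V d * \<phi> d))"
          using hk_far[OF t(1), of x z] dpos c1 unfolding d_def by (intro mult_left_mono) auto
        also have "t / (V d * \<phi> d) \<le> 1 / V d"
          using phid Vdpos phidpos t by (simp add: field_simps)
        hence "c * (t / (V d * \<phi> d)) \<le> c * (1 / V d)" using c1 by (intro mult_left_mono) auto
        also have "1 / V d \<le> 1 / (4 * c^2 * B * V s)"
          using Vd2 c1 B1 Vs Vdpos by (intro divide_left_mono) auto
        hence "c * (1 / V d) \<le> c * (1 / (4 * c^2 * B * V s))" using c1 by (intro mult_left_mono) auto
        also have "c * (1 / (4 * c^2 * B * V s)) = \<epsilon>" unfolding \<epsilon>_def using c1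
          by (simp add: power2_eq_square)
        finally have pe: "p t x z \<le> \<epsilon>" .
        have "(p t x z)^2 \<le> \<epsilon> * p t x z" using pe p_nn[OF t(1), of x z]
          by (simp add: power2_eq_square mult_right_mono)
        then show ?thesis using False by simp
      qed
      have fin: "emeasure \<mu> (cball x (K * s)) < \<infinity>" using vol_up K2' s by simp
      have int_ind: "integrable \<mu> (\<lambda>z. (c / V s)^2 * indicator (cball x (K * s)) z)"
        using fin cb_sets by (simp add: integrable_indicator_iff sets.Int_space_eq2)
      have int_p: "integrable \<mu> (\<lambda>z. \<epsilon> * p t x z)" using total[OF t(1), of x] by simp
      have "integral\<^sup>L \<mu> (\<lambda>z. (p t x z)^2)
          \<le> integral\<^sup>L \<mu> (\<lambda>z. (c / V s)^2 * indicator (cball x (K * s)) z + \<epsilon> * p t x z)"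
        by (rule integral_mono[OF int_sq Bochner_Integration.integrable_add[OF int_ind int_p] pw])
      also have "\<dots> = (c / V s)^2 * measure \<mu> (cball x (K * s)) + \<epsilon> * integral\<^sup>L \<mu> (\<lambda>z. p t x z)"
        using int_ind int_p fin cb_sets by (simp add: sets.Int_space_eq2)
      also have "\<epsilon> * integral\<^sup>L \<mu> (\<lambda>z. p t x z) \<le> \<epsilon>"
        using total[OF t(1), of x] eps by (simp add: mult_left_le)
      finally have up: "1 / (c * B * V s) \<le> (c / V s)^2 * measure \<mu> (cball x (K * s)) + \<epsilon>"
        using low by linarith
      define m where "m = measure \<mu> (cball x (K * s))"
      define X0 where "X0 = 1 / (c * B * V s)"
      have X0pos: "X0 > 0" unfolding X0_def using c1 B1 Vs by simp
      have epsX: "\<epsilon> = X0 / 4" unfolding \<epsilon>_def X0_def by simp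
      have "X0 \<le> (c / V s)^2 * m + X0 / 4" using up unfolding X0_def[symmetric] m_def[symmetric] epsX .
      then have h: "3 / 4 * X0 \<le> (c / V s)^2 * m" by simp
      have Ypos: "(c / V s)^2 > 0" using c1 Vs by simp
      have "3 / 4 * X0 / (c / V s)^2 \<le> m" using h Ypos by (simp add: pos_divide_le_eq mult.commute)
      moreover have "3 / 4 * X0 / (c / V s)^2 = 3 / 2 * (V s / (2 * c^3 * B))"
        unfolding X0_def using c1 B1 Vs by (simp add: field_simps power2_eq_square power3_eq_cube)
      moreover have "V s / (2 * c^3 * B) \<ge> 0" using c1 B1 Vs by simp
      ultimately show ?thesis unfolding m_def by linarith
    qed
    define K2 where "K2 = 1 / (2 * c^3 * B * (c2 * K powr d2))"
    have K2pos: "K2 > 0" unfolding K2_def using c1 B1 consts_pos(2) K2' by simp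
    have "K2 * V \<rho> \<le> measure \<mu> (cball x \<rho>)" if r: "\<rho> > 0" for x :: 'a and \<rho>
    proof -
      have s: "\<rho> / K > 0" "\<rho> / K < \<rho>" using r K2' by (auto simp: field_simps)
      have "V \<rho> / V (\<rho> / K) \<le> c2 * (\<rho> / (\<rho> / K)) powr d2" using conjunct2[OF Vgr[OF s]] .
      also have "\<rho> / (\<rho> / K) = K" using r K2' by simp
      finally have "V \<rho> \<le> c2 * K powr d2 * V (\<rho> / K)"
        using V_pos[OF s(1)] by (simp add: field_simps)
      then have "K2 * V \<rho> \<le> V (\<rho> / K) / (2 * c^3 * B)"
        unfolding K2_def using c1 B1 consts_pos(2) K2' by (simp add: field_simps)
      also have "\<dots> \<le> measure \<mu> (cball x (K * (\<rho> / K)))" by (rule core[OF s(1)])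
      also have "K * (\<rho> / K) = \<rho>" using K2' by simp
      finally show ?thesis .
    qed
    then show ?thesis using K2pos by blast
  qed
  then obtain K2 where K2: "K2 > 0" "\<And>x \<rho>. \<rho> > 0 \<Longrightarrow> K2 * V \<rho> \<le> measure \<mu> (cball x \<rho>)"
    by blast
  define C where "C = max (c * c) (c / K2)"
  have C1: "C \<ge> 1" unfolding C_def using c1 by (smt (verit) mult_le_cancel_left1)
  have main: "min 1 (V r / V (\<psi> t)) / C \<le> Pr x t r \<and> Pr x t r \<le> C * min 1 (V r / V (\<psi> t))"
    if r: "r > 0" and t: "t > 0" for r t and x :: 'a
  proof
    define q where "q = V r / V (\<psi> t)"
    have Vr: "V r > 0" using V_pos r by simp
    have Vs: "V (\<psi> t) > 0" using Vpsi t by simp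
    have "integral\<^sup>L \<mu> (\<lambda>y. indicator (cball x r) y * p t x y) \<le> (c / V (\<psi> t)) * measure \<mu> (cball x r)"
      by (rule L2[OF cb_sets conjunct1[OF vol_up[OF r]] conjunct2[OF law[OF t]]]) (rule p_le[OF t])
    then have "Pr x t r \<le> (c / V (\<psi> t)) * measure \<mu> (cball x r)"
      using law[OF t, of x r] by linarith
    also have "\<dots> \<le> (c / V (\<psi> t)) * (c * V r)"
      using vol_up[OF r, of x] c1 Vs by (intro mult_left_mono) auto
    also have "\<dots> = c * c * q" unfolding q_def by simp
    finally have up: "Pr x t r \<le> c * c * q" .
    show "Pr x t r \<le> C * min 1 (V r / V (\<psi> t))"
    proof (cases "q \<le> 1")
      case True
      have "c * c * q \<le> C * q" unfolding C_def using Vr Vs q_def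
        by (intro mult_right_mono) auto
      then show ?thesis using up True unfolding q_def[symmetric] by simp
    next
      case False
      then show ?thesis using Pr_le1[of x t r] C1 unfolding q_def[symmetric] by simp
    qed
    define m where "m = min r (\<psi> t)"
    have m: "m > 0" "m \<le> r" "m \<le> \<psi> t" using r psi[OF t] unfolding m_def by auto
    have Vm: "V m / V (\<psi> t) = min 1 q"
    proof (cases "r \<le> \<psi> t")
      case True
      then show ?thesis using Vle[OF r True] Vs unfolding m_def q_def by simp
    next
      case False
      then show ?thesis using Vle[OF psi[OF t, THEN conjunct1], of r] Vs Vr
        unfolding m_def q_def by simp
    qed
    have sub: "{\<omega> \<in> space (Px x). \<exists>y. X t \<omega> = Some y \<and> dist y x \<le> m}
       \<subseteq> {\<omega> \<in> space (Px x). \<exists>y. X t \<omega> = Some y \<and> dist y x \<le> r}" using m by auto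
    have "Pr x t m \<le> Pr x t r"
    proof -
      have e: "{\<omega> \<in> space (Px x). \<exists>y. X t \<omega> = Some y \<and> dist y x \<le> r}
          = {\<omega> \<in> space (Px x). \<exists>y\<in>cball x r. X t \<omega> = Some y}"
        by (auto simp: dist_commute)
      have "{\<omega> \<in> space (Px x). \<exists>y. X t \<omega> = Some y \<and> dist y x \<le> r} \<in> sets (Px x)"
        unfolding e using X_law[OF t, of "cball x r" x] by simp
      then show ?thesis unfolding Pr_def
        using prob_space.finite_measure[OF Px_prob] sub by (intro finite_measure.finite_measure_mono) auto
    qed
    have a: "1 / (c * V (\<psi> t)) > 0" using c1 Vs by simp
    have lb: "1 / (c * V (\<psi> t)) \<le> p t x y" if "y \<in> cball x m" for y
      using p_near[OF t, of x y] that m by simp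
    have "1 / (c * V (\<psi> t)) * measure \<mu> (cball x m)
        \<le> integral\<^sup>L \<mu> (\<lambda>y. indicator (cball x m) y * p t x y)"
      by (rule L1(2)[OF cb_sets conjunct2[OF law[OF t]] a lb])
    then have "1 / (c * V (\<psi> t)) * measure \<mu> (cball x m) \<le> Pr x t m"
      using law[OF t, of x m] by linarith
    moreover have "K2 * V m \<le> measure \<mu> (cball x m)" using K2(2)[OF m(1)] by simp
    ultimately have "1 / (c * V (\<psi> t)) * (K2 * V m) \<le> Pr x t m"
      using a by (smt (verit) mult_left_mono)
    moreover have "1 / (c * V (\<psi> t)) * (K2 * V m) = (K2 / c) * min 1 q"
      using Vm[symmetric] by (simp add: field_simps)
    moreover have "min 1 q / C \<le> (K2 / c) * min 1 q"
    proof -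
      have "min 1 q \<ge> 0" unfolding q_def using Vr Vs by simp
      moreover have "1 / C \<le> K2 / c"
      proof -
        have "c / K2 \<le> C" unfolding C_def by simp
        moreover have "c / K2 > 0" using K2(1) c1 by simp
        ultimately have "1 / C \<le> 1 / (c / K2)" using C1 c1 K2(1) by (intro divide_left_mono) auto
        then show ?thesis by simp
      qed
      ultimately show ?thesis by (metis mult_right_mono divide_inverse mult.commute mult_1)
    qed
    ultimately show "min 1 (V r / V (\<psi> t)) / C \<le> Pr x t r"
      using \<open>Pr x t m \<le> Pr x t r\<close> unfolding q_def by linarith
  qed
  show ?thesis using C1 main unfolding Pr_def \<psi>_def by blast
qed

end
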